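(* Let $c_0,c_1\ge0$ be arbitrary. Suppose $\varepsilon_0,\varepsilon_1$ are i.i.d. with mean zero, with a density, and symmetrically distributed around zero. Then the estimator is incentive compatible: for every $(\beta_0,\beta_1)\in\mathbb{R}^2$ and all $x,r\in\{0,1\}$, $$\mathbb{E}_\varepsilon\big[\hat f(x)-f(x)\big]^2\le \mathbb{E}_\varepsilon\big[\hat f(r)-f(x)\big]^2 .$$
   Context: Setting: an agent has a binary characteristic $x\in\{0,1\}$ and ideal action $f(x)=\beta_0+\beta_1x$, with unknown parameters $\beta=(\beta_0,\beta_1)$. A statistician observes $y_x=f(x)+\varepsilon_x$ for $x=0,1$, and computes $(b_0,b_1)$ solving $\min_{b_0,b_1}\sum_{x=0,1}(y_x-b_0-b_1x)^2+c_0\mathbf{1}_{b_1\neq0}+c_1|b_1|$, breaking indifference between including ($b_1\neq0$) and excluding ($b_1=0$) in favor of inclusion. Given the agent's report $r\in\{0,1\}$ the statistician takes the action $\hat f(r)=b_0+b_1r$; the agent's payoff is $-(\hat f(r)-f(x))^2$. The estimator is incentive compatible if the displayed inequality holds for every $\beta$ and all $x,r$. *)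

theory Defs
  imports "HOL-Probability.Probability"
begin

definition pen_obj :: "real \<Rightarrow> real \<Rightarrow> real \<Rightarrow> real \<Rightarrow> real \<times> real \<Rightarrow> real" where
  "pen_obj c0 c1 y0 y1 b =
     (y0 - fst b - snd b * 0)^2 + (y1 - fst b - snd b * 1)^2
     + c0 * (if snd b \<noteq> 0 then 1 else 0) + c1 * \<bar>snd b\<bar>"

definition is_minimizer :: "real \<Rightarrow> real \<Rightarrow> real \<Rightarrow> real \<Rightarrow> real \<times> real \<Rightarrow> bool" where
  "is_minimizer c0 c1 y0 y1 b \<longleftrightarrow> (\<forall>b'. pen_obj c0 c1 y0 y1 b \<le> pen_obj c0 c1 y0 y1 b')"

text \<open>The estimate (b0,b1): a minimizer, with ties between inclusion (b1 \<noteq> 0) and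
  exclusion (b1 = 0) broken in favor of inclusion.\<close>
definition estimate :: "real \<Rightarrow> real \<Rightarrow> real \<Rightarrow> real \<Rightarrow> real \<times> real" where
  "estimate c0 c1 y0 y1 =
     (THE b. is_minimizer c0 c1 y0 y1 b \<and>
        (snd b = 0 \<longrightarrow> \<not> (\<exists>b'. is_minimizer c0 c1 y0 y1 b' \<and> snd b' \<noteq> 0)))"

definition fhat :: "real \<Rightarrow> real \<Rightarrow> real \<Rightarrow> real \<Rightarrow> real \<Rightarrow> real" where
  "fhat c0 c1 y0 y1 r = fst (estimate c0 c1 y0 y1) + snd (estimate c0 c1 y0 y1) * r"

end

theory Submission
  imports Defs
begin

definition gfun :: "real \<Rightarrow> real \<Rightarrow> real \<Rightarrow> real" where
  "gfun c0 c1 d = (if c1 < \<bar>d\<bar> \<and> 2*c0 \<le> (\<bar>d\<bar>-c1)^2 then (if 0 < d then d - c1 else d + c1) else 0)"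

definition hfun :: "real \<Rightarrow> real \<Rightarrow> real \<Rightarrow> real \<Rightarrow> real" where
  "hfun c0 c1 d t = (d-t)^2/2 + c0 * (if t \<noteq> 0 then 1 else 0) + c1 * \<bar>t\<bar>"

lemma pen_obj_eq:
  "pen_obj c0 c1 y0 y1 b = 2*(fst b - (y0+y1-snd b)/2)^2 + hfun c0 c1 (y1-y0) (snd b)"
  unfolding pen_obj_def hfun_def by (simp add: power2_eq_square field_simps)

lemma h_nz:
  assumes "t \<noteq> 0" "d \<noteq> 0"
  shows "hfun c0 c1 d t = c1*\<bar>d\<bar> - c1^2/2 + c0 + (t - (d - c1 * (sgn d)))^2/2 + c1*(\<bar>t\<bar> - (sgn d) * t)"
proof (cases "d > 0")
  case True then show ?thesis using assms unfolding hfun_def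
    by (simp add: power2_eq_square field_simps)
next
  case False then have "d < 0" using assms by simp
  then show ?thesis using assms unfolding hfun_def
    by (simp add: power2_eq_square field_simps)
qed

lemma H:
  assumes c0: "c0 \<ge> 0" and c1: "c1 \<ge> 0"
  shows "hfun c0 c1 d (gfun c0 c1 d) \<le> hfun c0 c1 d t
     \<and> (t \<noteq> gfun c0 c1 d \<and> t \<noteq> 0 \<longrightarrow> hfun c0 c1 d (gfun c0 c1 d) < hfun c0 c1 d t)
     \<and> (gfun c0 c1 d = 0 \<and> t \<noteq> 0 \<longrightarrow> hfun c0 c1 d (gfun c0 c1 d) < hfun c0 c1 d t)"
proof (cases "\<bar>d\<bar> \<le> c1")
  case True
  then have g: "gfun c0 c1 d = 0" unfolding gfun_def by auto
  have "hfun c0 c1 d 0 < hfun c0 c1 d t" if "t \<noteq> 0"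
  proof -
    have "t^2 > 0" using that by simp
    moreover have "d*t \<le> c1*\<bar>t\<bar>"
      by (metis True abs_ge_self abs_mult abs_ge_zero mult_right_mono order_trans)
    ultimately show ?thesis using that c0 unfolding hfun_def
      by (simp add: power2_eq_square field_simps)
  qed
  then show ?thesis using g by (cases "t = 0") auto
next
  case False
  then have d0: "d \<noteq> 0" and dc: "c1 < \<bar>d\<bar>" using c1 by auto
  have sg: "\<bar>t\<bar> - (sgn d) * t \<ge> 0" for t
    by (cases "d > 0") (auto simp: sgn_if)
  define v where "v = c1*\<bar>d\<bar> - c1^2/2 + c0"
  have h0: "hfun c0 c1 d 0 = d^2/2" unfolding hfun_def by simp
  have hv: "hfun c0 c1 d t \<ge> v" if "t \<noteq> 0" for t
    using h_nz[OF that d0, of c0 c1] sg[of t] c1 unfolding v_def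
    by (simp add: add_nonneg_nonneg)
  have hvs: "hfun c0 c1 d t > v" if "t \<noteq> 0" "t \<noteq> d - c1 * (sgn d)" for t
  proof -
    have "(t - (d - c1 * (sgn d)))^2 > 0" using that by simp
    moreover have "c1 * (\<bar>t\<bar> - (sgn d) * t) \<ge> 0" using sg[of t] c1 by simp
    moreover note h_nz[OF that(1) d0, of c0 c1]
    ultimately show ?thesis unfolding v_def by linarith
  qed
  have key: "v \<le> d^2/2 \<longleftrightarrow> 2*c0 \<le> (\<bar>d\<bar>-c1)^2"
  proof -
    have "(\<bar>d\<bar>-c1)^2 = d^2 - 2*c1*\<bar>d\<bar> + c1^2"
      by (simp add: power2_diff power2_abs algebra_simps)
    then show ?thesis unfolding v_def by linarith
  qed
  show ?thesis
  proof (cases "2*c0 \<le> (\<bar>d\<bar>-c1)^2")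
    case True
    have g: "gfun c0 c1 d = d - c1 * (sgn d)" using True dc c1 unfolding gfun_def
      by (auto simp: sgn_if)
    have gnz: "d - c1 * (sgn d) \<noteq> 0" using dc c1 by (auto simp: sgn_if)
    have hg: "hfun c0 c1 d (gfun c0 c1 d) = v"
      using h_nz[OF gnz d0, of c0 c1] g dc unfolding v_def
      by (cases "d > 0") (auto simp: sgn_if)
    show ?thesis
      using hg g gnz hv hvs key True h0 by (cases "t = 0") auto
  next
    case False
    have g: "gfun c0 c1 d = 0" using False unfolding gfun_def by auto
    show ?thesis using g h0 key False hv by (cases "t = 0") force+
  qed
qed


lemma estimate_eq:
  assumes c0: "c0 \<ge> 0" and c1: "c1 \<ge> 0"
  shows "estimate c0 c1 y0 y1 = ((y0+y1-gfun c0 c1 (y1-y0))/2, gfun c0 c1 (y1-y0))"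
proof -
  let ?d = "y1 - y0"
  let ?g = "gfun c0 c1 ?d"
  let ?b = "((y0+y1-?g)/2, ?g)"
  have objb: "pen_obj c0 c1 y0 y1 ?b = hfun c0 c1 ?d ?g"
    by (simp add: pen_obj_eq)
  have lb: "pen_obj c0 c1 y0 y1 b \<ge> hfun c0 c1 ?d (snd b)" for b
    by (simp add: pen_obj_eq)
  have minb: "is_minimizer c0 c1 y0 y1 ?b"
    unfolding is_minimizer_def
    using objb lb H[OF c0 c1] order_trans by metis
  have P: "is_minimizer c0 c1 y0 y1 ?b \<and>
        (snd ?b = 0 \<longrightarrow> \<not> (\<exists>b'. is_minimizer c0 c1 y0 y1 b' \<and> snd b' \<noteq> 0))"
  proof (intro conjI impI minb notI)
    assume "snd ?b = 0" and "\<exists>b'. is_minimizer c0 c1 y0 y1 b' \<and> snd b' \<noteq> 0"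
    then obtain b' where m: "is_minimizer c0 c1 y0 y1 b'" "snd b' \<noteq> 0" and g0: "?g = 0" by auto
    have "pen_obj c0 c1 y0 y1 b' \<le> pen_obj c0 c1 y0 y1 ?b" using m unfolding is_minimizer_def by blast
    moreover have "hfun c0 c1 ?d ?g < hfun c0 c1 ?d (snd b')" using H[OF c0 c1, of ?d "snd b'"] g0 m by auto
    ultimately show False using objb lb[of b'] by linarith
  qed
  have U: "b = ?b" if "is_minimizer c0 c1 y0 y1 b \<and>
        (snd b = 0 \<longrightarrow> \<not> (\<exists>b'. is_minimizer c0 c1 y0 y1 b' \<and> snd b' \<noteq> 0))" for b
  proof -
    have mb: "pen_obj c0 c1 y0 y1 b \<le> pen_obj c0 c1 y0 y1 ?b" using that unfolding is_minimizer_def by blast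
    have hle: "hfun c0 c1 ?d (snd b) \<le> hfun c0 c1 ?d ?g" using mb objb lb[of b] by linarith
    have sb: "snd b = ?g"
    proof (rule ccontr)
      assume ne: "snd b \<noteq> ?g"
      show False
      proof (cases "snd b = 0")
        case True
        then have "?g \<noteq> 0" using ne by simp
        then have "\<exists>b'. is_minimizer c0 c1 y0 y1 b' \<and> snd b' \<noteq> 0" using minb by (intro exI[of _ ?b]) simp
        then show False using that True by blast
      next
        case False
        then show False using H[OF c0 c1, of ?d "snd b"] ne hle by auto
      qed
    qed
    have "2*(fst b - (y0+y1-snd b)/2)^2 = pen_obj c0 c1 y0 y1 b - hfun c0 c1 ?d (snd b)"
      by (simp add: pen_obj_eq)
    also have "\<dots> \<le> 0" using mb objb sb by simp
    finally have "fst b = (y0+y1-snd b)/2" by simp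
    then show ?thesis using sb by (cases b) simp
  qed
  show ?thesis unfolding estimate_def
    apply (rule the_equality)
     apply (rule P)
    apply (erule U)
    done
qed

lemma fhat_eq:
  assumes "c0 \<ge> 0" "c1 \<ge> 0"
  shows "fhat c0 c1 y0 y1 r = (y0+y1-gfun c0 c1 (y1-y0))/2 + gfun c0 c1 (y1-y0) * r"
  unfolding fhat_def estimate_eq[OF assms] by simp

lemma g_odd: "c1 \<ge> 0 \<Longrightarrow> gfun c0 c1 (-d) = - gfun c0 c1 d"
  unfolding gfun_def by auto

lemma g_mono:
  assumes c1: "c1 \<ge> 0" and le: "a \<le> b"
  shows "gfun c0 c1 a \<le> gfun c0 c1 b"
proof -
  have I: "c1 < \<bar>v\<bar> \<and> 2*c0 \<le> (\<bar>v\<bar>-c1)^2" if "c1 < \<bar>u\<bar> \<and> 2*c0 \<le> (\<bar>u\<bar>-c1)^2" "\<bar>u\<bar> \<le> \<bar>v\<bar>" for u v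
  proof -
    have "(\<bar>u\<bar>-c1)^2 \<le> (\<bar>v\<bar>-c1)^2" using that by (intro power_mono) auto
    then show ?thesis using that by linarith
  qed
  show ?thesis
  proof (cases "0 \<le> a")
    case True
    then show ?thesis using I[of a b] le c1 unfolding gfun_def by auto
  next
    case False
    show ?thesis
    proof (cases "b \<le> 0")
      case True
      then show ?thesis using I[of b a] le c1 False unfolding gfun_def by auto
    next
      case False
      then show ?thesis using \<open>\<not> 0 \<le> a\<close> c1 unfolding gfun_def by auto
    qed
  qed
qed

lemma g_sum: 
  assumes "c1 \<ge> 0"
  shows "\<beta> * (gfun c0 c1 (\<beta> + u) + gfun c0 c1 (\<beta> - u)) \<ge> 0"
proof (cases "\<beta> \<ge> 0")
  case True
  have "gfun c0 c1 (u - \<beta>) \<le> gfun c0 c1 (\<beta> + u)" using g_mono[OF assms] True by simp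
  moreover have "gfun c0 c1 (\<beta> - u) = - gfun c0 c1 (u - \<beta>)" using g_odd[OF assms, of c0 "u-\<beta>"] by simp
  ultimately show ?thesis using True by simp
next
  case False
  have "gfun c0 c1 (\<beta> + u) \<le> gfun c0 c1 (u - \<beta>)" using g_mono[OF assms] False by simp
  moreover have "gfun c0 c1 (\<beta> - u) = - gfun c0 c1 (u - \<beta>)" using g_odd[OF assms, of c0 "u-\<beta>"] by simp
  ultimately show ?thesis using False by (simp add: mult_nonpos_nonpos)
qed

lemma g_meas[measurable]: "gfun c0 c1 \<in> borel_measurable borel"
  unfolding gfun_def by measurable


lemma pw:
  fixes s \<beta>1 x r a b :: real
  assumes "x \<in> {0,1}" "r \<in> {0,1}" "\<beta>1 * (a + b) \<ge> 0"
  shows "((s + \<beta>1 - a)/2 + a*x - \<beta>1*x)^2 + ((s + \<beta>1 - b)/2 + b*x - \<beta>1*x)^2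
       + ((-s + \<beta>1 - b)/2 + b*x - \<beta>1*x)^2 + ((-s + \<beta>1 - a)/2 + a*x - \<beta>1*x)^2
     \<le> ((s + \<beta>1 - a)/2 + a*r - \<beta>1*x)^2 + ((s + \<beta>1 - b)/2 + b*r - \<beta>1*x)^2
       + ((-s + \<beta>1 - b)/2 + b*r - \<beta>1*x)^2 + ((-s + \<beta>1 - a)/2 + a*r - \<beta>1*x)^2"
proof -
  have "x = r \<or> (x = 0 \<and> r = 1) \<or> (x = 1 \<and> r = 0)" using assms by auto
  moreover
  { assume "x = 0" "r = 1"
    then have ?thesis using assms(3) by (simp add: power2_eq_square field_simps) }
  moreover
  { assume "x = 1" "r = 0"
    then have ?thesis using assms(3) by (simp add: power2_eq_square field_simps) }
  ultimately show ?thesis by auto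
qed

lemma swap_inv:
  assumes "prob_space D" and f: "f \<in> borel_measurable (D \<Otimes>\<^sub>M D)"
  shows "(\<integral>\<^sup>+ e. f (snd e, fst e) \<partial>(D \<Otimes>\<^sub>M D)) = integral\<^sup>N (D \<Otimes>\<^sub>M D) f"
proof -
  interpret prob_space D by fact
  interpret pair_sigma_finite D D
    by (simp add: pair_sigma_finite.intro sigma_finite_measure_axioms)
  have "integral\<^sup>N (distr (D \<Otimes>\<^sub>M D) (D \<Otimes>\<^sub>M D) (\<lambda>(x, y). (y, x))) f
      = (\<integral>\<^sup>+ e. f ((\<lambda>(x, y). (y, x)) e) \<partial>(D \<Otimes>\<^sub>M D))"
    by (rule nn_integral_distr) (auto simp: measurable_pair_swap' f)
  then show ?thesis using distr_pair_swap[symmetric] by (simp add: split_beta)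
qed

lemma neg_inv:
  assumes "prob_space D" and sD: "sets D = sets borel" and dD: "distr D borel uminus = D"
    and f: "f \<in> borel_measurable (borel \<Otimes>\<^sub>M borel)"
  shows "(\<integral>\<^sup>+ e. f (- fst e, - snd e) \<partial>(D \<Otimes>\<^sub>M D)) = integral\<^sup>N (D \<Otimes>\<^sub>M D) (f::real\<times>real\<Rightarrow>ennreal)"
proof -
  interpret prob_space D by fact
  have um: "(uminus::real\<Rightarrow>real) \<in> measurable D borel"
    by (subst measurable_cong_sets[OF sD refl]) simp
  have sf: "sigma_finite_measure (distr D borel (uminus::real\<Rightarrow>real))"
    using dD sigma_finite_measure_axioms by simp
  have E: "distr (D \<Otimes>\<^sub>M D) (borel \<Otimes>\<^sub>M borel) (\<lambda>(x, y). (-x, -y)) = D \<Otimes>\<^sub>M D"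
    using pair_measure_distr[OF um um sf] dD by simp
  have negm: "(\<lambda>(x::real, y::real). (-x, -y)) \<in> measurable (D \<Otimes>\<^sub>M D) (borel \<Otimes>\<^sub>M borel)"
  proof -
    have "sets (D \<Otimes>\<^sub>M D) = sets (borel \<Otimes>\<^sub>M borel)" by (intro sets_pair_measure_cong sD)
    then show ?thesis by (subst measurable_cong_sets[OF _ refl]) (assumption, measurable)
  qed
  have "integral\<^sup>N (distr (D \<Otimes>\<^sub>M D) (borel \<Otimes>\<^sub>M borel) (\<lambda>(x, y). (-x, -y))) f
      = (\<integral>\<^sup>+ e. f ((\<lambda>(x, y). (-x, -y)) e) \<partial>(D \<Otimes>\<^sub>M D))"
    by (rule nn_integral_distr) (auto simp: negm f)
  then show ?thesis using E by (simp add: split_beta)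
qed


definition Qf :: "real \<Rightarrow> real \<Rightarrow> real \<Rightarrow> real \<Rightarrow> real \<Rightarrow> real \<Rightarrow> real \<Rightarrow> real" where
  "Qf c0 c1 \<beta>1 z x e0 e1 = ((e0+e1+\<beta>1 - gfun c0 c1 (\<beta>1+e1-e0))/2 + gfun c0 c1 (\<beta>1+e1-e0)*z - \<beta>1*x)^2"

lemma pw4:
  assumes c1: "c1 \<ge> 0" and "x \<in> {0,1}" "r \<in> {0,1}"
  shows "Qf c0 c1 \<beta>1 x x e0 e1 + Qf c0 c1 \<beta>1 x x e1 e0 + Qf c0 c1 \<beta>1 x x (-e0) (-e1) + Qf c0 c1 \<beta>1 x x (-e1) (-e0)
       \<le> Qf c0 c1 \<beta>1 r x e0 e1 + Qf c0 c1 \<beta>1 r x e1 e0 + Qf c0 c1 \<beta>1 r x (-e0) (-e1) + Qf c0 c1 \<beta>1 r x (-e1) (-e0)"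
proof -
  have 1: "\<beta>1 + - e1 - - e0 = \<beta>1 + e0 - e1" by simp
  have 2: "\<beta>1 + - e0 - - e1 = \<beta>1 + e1 - e0" by simp
  define a where "a = gfun c0 c1 (\<beta>1 + e1 - e0)"
  define b where "b = gfun c0 c1 (\<beta>1 + e0 - e1)"
  have ab: "\<beta>1 * (a + b) \<ge> 0" unfolding a_def b_def
    using g_sum[OF c1, of \<beta>1 c0 "e1 - e0"] by (simp add: algebra_simps)
  have "x = r \<or> (x = 0 \<and> r = 1) \<or> (x = 1 \<and> r = 0)" using assms by auto
  moreover
  { assume "x = 0" "r = 1"
    then have ?thesis using ab unfolding Qf_def 1 2 a_def[symmetric] b_def[symmetric]
      by (simp add: power2_eq_square field_simps) }
  moreover
  { assume "x = 1" "r = 0"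
    then have ?thesis using ab unfolding Qf_def 1 2 a_def[symmetric] b_def[symmetric]
      by (simp add: power2_eq_square field_simps) }
  ultimately show ?thesis by auto
qed


lemma Qf_meas[measurable]: "(\<lambda>e. Qf c0 c1 \<beta>1 z x (fst e) (snd e)) \<in> borel_measurable (borel \<Otimes>\<^sub>M borel)"
  unfolding Qf_def by measurable

lemma integrand_eq:
  assumes "c0 \<ge> 0" "c1 \<ge> 0"
  shows "(fhat c0 c1 (\<beta>0 + \<beta>1 * 0 + e0) (\<beta>0 + \<beta>1 * 1 + e1) z - (\<beta>0 + \<beta>1 * x))^2
     = Qf c0 c1 \<beta>1 z x e0 e1"
proof -
  have d: "(\<beta>0 + \<beta>1 * 1 + e1) - (\<beta>0 + \<beta>1 * 0 + e0) = \<beta>1 + e1 - e0" by simp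
  show ?thesis unfolding fhat_eq[OF assms] d Qf_def by (simp add: field_simps)
qed

lemma four_int:
  assumes P: "prob_space D" and sD: "sets D = sets borel" and dD: "distr D borel uminus = D"
    and f: "f \<in> borel_measurable (borel \<Otimes>\<^sub>M borel)"
  shows "4 * integral\<^sup>N (D \<Otimes>\<^sub>M D) (f::real\<times>real\<Rightarrow>ennreal)
    = (\<integral>\<^sup>+ e. f e + f (snd e, fst e) + f (- fst e, - snd e) + f (- snd e, - fst e) \<partial>(D \<Otimes>\<^sub>M D))"
proof -
  have sM: "sets (D \<Otimes>\<^sub>M D) = sets (borel \<Otimes>\<^sub>M borel)" by (intro sets_pair_measure_cong sD)
  have mc: "g \<in> borel_measurable (D \<Otimes>\<^sub>M D)" if "g \<in> borel_measurable (borel \<Otimes>\<^sub>M borel)" for g :: "real\<times>real \<Rightarrow> ennreal"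
    using that by (subst measurable_cong_sets[OF sM refl])
  have f1: "(\<lambda>e. f (snd e, fst e)) \<in> borel_measurable (borel \<Otimes>\<^sub>M borel)" using f by measurable
  have f2: "(\<lambda>e. f (- fst e, - snd e)) \<in> borel_measurable (borel \<Otimes>\<^sub>M borel)" using f by measurable
  have f3: "(\<lambda>e. f (- snd e, - fst e)) \<in> borel_measurable (borel \<Otimes>\<^sub>M borel)" using f by measurable
  have i1: "(\<integral>\<^sup>+ e. f (snd e, fst e) \<partial>(D \<Otimes>\<^sub>M D)) = integral\<^sup>N (D \<Otimes>\<^sub>M D) f"
    by (rule swap_inv[OF P mc[OF f]])
  have i2: "(\<integral>\<^sup>+ e. f (- fst e, - snd e) \<partial>(D \<Otimes>\<^sub>M D)) = integral\<^sup>N (D \<Otimes>\<^sub>M D) f"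
    by (rule neg_inv[OF P sD dD f])
  have i3: "(\<integral>\<^sup>+ e. f (- snd e, - fst e) \<partial>(D \<Otimes>\<^sub>M D)) = integral\<^sup>N (D \<Otimes>\<^sub>M D) f"
    using neg_inv[OF P sD dD f1] i1 by simp
  have "(\<integral>\<^sup>+ e. f e + f (snd e, fst e) + f (- fst e, - snd e) + f (- snd e, - fst e) \<partial>(D \<Otimes>\<^sub>M D))
     = integral\<^sup>N (D \<Otimes>\<^sub>M D) f + (\<integral>\<^sup>+ e. f (snd e, fst e) \<partial>(D \<Otimes>\<^sub>M D))
       + (\<integral>\<^sup>+ e. f (- fst e, - snd e) \<partial>(D \<Otimes>\<^sub>M D)) + (\<integral>\<^sup>+ e. f (- snd e, - fst e) \<partial>(D \<Otimes>\<^sub>M D))"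
    using mc[OF f] mc[OF f1] mc[OF f2] mc[OF f3]
    by (simp add: nn_integral_add)
  also have "\<dots> = 4 * integral\<^sup>N (D \<Otimes>\<^sub>M D) f"
  proof -
    have "(4::ennreal) = 1+1+1+1" by simp
    then show ?thesis using i1 i2 i3 by (simp only: distrib_right mult_1)
  qed
  finally show ?thesis by simp
qed

theorem proposition2:
  fixes c0 c1 :: real and D :: "real measure" and \<beta>0 \<beta>1 x r :: real
  assumes "c0 \<ge> 0" and "c1 \<ge> 0"
    and "prob_space D" and "sets D = sets borel"
    and "integrable D (\<lambda>e. e)" and "(\<integral>e. e \<partial>D) = 0"
    and "absolutely_continuous lborel D"
    and "distr D borel uminus = D"
    and "x \<in> {0, 1}" and "r \<in> {0, 1}"
  shows "(\<integral>\<^sup>+ e. ennreal ((fhat c0 c1 (\<beta>0 + \<beta>1 * 0 + fst e) (\<beta>0 + \<beta>1 * 1 + snd e) x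
                              - (\<beta>0 + \<beta>1 * x))^2) \<partial>(D \<Otimes>\<^sub>M D))
       \<le> (\<integral>\<^sup>+ e. ennreal ((fhat c0 c1 (\<beta>0 + \<beta>1 * 0 + fst e) (\<beta>0 + \<beta>1 * 1 + snd e) r
                              - (\<beta>0 + \<beta>1 * x))^2) \<partial>(D \<Otimes>\<^sub>M D))"
proof -
  let ?F = "\<lambda>z e. ennreal (Qf c0 c1 \<beta>1 z x (fst e) (snd e))"
  have L: "(\<integral>\<^sup>+ e. ennreal ((fhat c0 c1 (\<beta>0 + \<beta>1 * 0 + fst e) (\<beta>0 + \<beta>1 * 1 + snd e) z
                              - (\<beta>0 + \<beta>1 * x))^2) \<partial>(D \<Otimes>\<^sub>M D)) = integral\<^sup>N (D \<Otimes>\<^sub>M D) (?F z)" for z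
    by (rule nn_integral_cong) (subst integrand_eq[OF assms(1,2)], rule refl)
  have m: "?F z \<in> borel_measurable (borel \<Otimes>\<^sub>M borel)" for z by measurable
  have "4 * integral\<^sup>N (D \<Otimes>\<^sub>M D) (?F x) \<le> 4 * integral\<^sup>N (D \<Otimes>\<^sub>M D) (?F r)"
    unfolding four_int[OF assms(3,4,8) m]
  proof (rule nn_integral_mono)
    fix e :: "real \<times> real"
    have nn: "Qf c0 c1 \<beta>1 z x a b \<ge> 0" for z a b unfolding Qf_def by simp
    show "?F x e + ?F x (snd e, fst e) + ?F x (- fst e, - snd e) + ?F x (- snd e, - fst e)
       \<le> ?F r e + ?F r (snd e, fst e) + ?F r (- fst e, - snd e) + ?F r (- snd e, - fst e)"
      using pw4[OF assms(2,9,10), of c0 \<beta>1 "fst e" "snd e"] nn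
      by (simp add: ennreal_plus[symmetric] add_nonneg_nonneg del: ennreal_plus)
  qed
  then show ?thesis unfolding L
    by (simp add: ennreal_mult_le_mult_iff)
qed

end
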